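(* Let $r\ge1$, let $\kappa\ge\max\{\tfrac32m_2-1,2\}$, and let $U_0\in\mathcal X_{m_2}$. Then for every time step $\tau>0$, the iterates of the rescaled ETDRK$r$ scheme ($U^0=U_0$, $U^{n+1}=W_r^n(\tau)$) satisfy $\|U^n(\boldsymbol x)\|_{\rm F}\le\sqrt{m_2}$ for all $n\ge1$ and all $\boldsymbol x\in\Omega$.
   Context: Let $d\in\{1,2,3\}$ and let $\Omega\subset\mathbb{R}^d$ be a rectangular box, all functions on $\Omega$ being $\Omega$-periodic. Let $m_1\ge m_2\ge1$ be integers, $\varepsilon>0$, $\kappa>0$. $\|\cdot\|_{\rm F}$ is the Frobenius norm. For $U\in\mathbb{R}^{m_1\times m_2}$, $f(U)=U-UU^\top U$ and $\mathcal N[U]=\kappa U+f(U)$ (applied pointwise to functions). $\mathcal X$ is the Banach space of continuous $\Omega$-periodic functions $\overline\Omega\to\mathbb{R}^{m_1\times m_2}$ with norm $\|W\|_{\mathcal X}=\max_{\boldsymbol x}\|W(\boldsymbol x)\|_{\rm F}$, and $\mathcal X_{m_2}=\{W\in\mathcal X:\|W\|_{\mathcal X}\le\sqrt{m_2}\}$. $\mathcal L_\kappa=\varepsilon^2\Delta-\kappa\mathcal I$ with periodic boundary conditions, acting componentwise, and $e^{t\mathcal L_\kappa}=e^{-\kappa t}e^{t\varepsilon^2\Delta}$ with $e^{t\varepsilon^2\Delta}$ the periodic heat semigroup. Rescaled ETDRK scheme: for each $j\ge1$ fix nodes $0=a_{j,0}<a_{j,1}<\dots<a_{j,j}=1$.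 Given a time step $\tau>0$ and $U^n\in\mathcal X$, define for $s\in[0,\tau]$: $W_1^n(s)=e^{s\mathcal L_\kappa}U^n+\int_0^s e^{(s-\sigma)\mathcal L_\kappa}\mathcal N[U^n]\,\mathrm d\sigma$. Recursively for $j\ge1$: let $P_j^n(s,\boldsymbol x)$ be the unique polynomial in $s$ of degree $\le j$ with coefficients in $\mathbb{R}^{m_1\times m_2}$ (depending on $\boldsymbol x$) such that $P_j^n(0,\boldsymbol x)=\mathcal N[U^n(\boldsymbol x)]$ and $P_j^n(a_{j,k}\tau,\boldsymbol x)=\mathcal N[W_j^n(a_{j,k}\tau,\boldsymbol x)]$ for $k=1,\dots,j$; let $\alpha_j^n(\boldsymbol x)=\min\{\kappa\sqrt{m_2}/\max_{s\in[0,\tau]}\|P_j^n(s,\boldsymbol x)\|_{\rm F},\,1\}$ (taken to be $1$ if the maximum is $0$), $\widetilde P_j^n(s,\boldsymbol x)=\alpha_j^n(\boldsymbol x)P_j^n(s,\boldsymbol x)$, and $W_{j+1}^n(s)=e^{s\mathcal L_\kappa}U^n+\int_0^s e^{(s-\sigma)\mathcal L_\kappa}\widetilde P_j^n(\sigma)\,\mathrm d\sigma$. The rescaled ETDRK$r$ scheme is $U^0=U_0$, $U^{n+1}=W_r^n(\tau)$ for $n\ge0$. *)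

theory Defs
  imports "HOL-Analysis.Analysis"
begin

text \<open>Matrices in R^(m1 x m2) are represented as real^'m2^'m1 (rows indexed by 'm1).
  Points of R^d are real^'d.\<close>

definition frob_norm :: "real^'m2^'m1 \<Rightarrow> real" where
  "frob_norm A = sqrt (\<Sum>i\<in>UNIV. \<Sum>j\<in>UNIV. (A$i$j)^2)"

definition fnl :: "real^'m2^'m1 \<Rightarrow> real^'m2^'m1" where
  "fnl U = U - U ** transpose U ** U"

definition Nop :: "real \<Rightarrow> real^'m2^'m1 \<Rightarrow> real^'m2^'m1" where
  "Nop \<kappa> U = \<kappa> *\<^sub>R U + fnl U"

definition heat_kernel :: "real \<Rightarrow> real \<Rightarrow> real^'d \<Rightarrow> real" where
  "heat_kernel eps t z =
     (4 * pi * eps\<^sup>2 * t) powr (- real CARD('d) / 2) * exp (- ((norm z)\<^sup>2) / (4 * eps\<^sup>2 * t))"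

text \<open>Periodic heat semigroup e^(t eps^2 Delta), acting on periodic functions on R^d
  (the periodic extension of a function on the box) by convolution with the heat kernel.\<close>
definition heat_sg :: "real \<Rightarrow> real \<Rightarrow> (real^'d \<Rightarrow> 'v::euclidean_space) \<Rightarrow> real^'d \<Rightarrow> 'v" where
  "heat_sg eps t g x = (if t = 0 then g x else integral UNIV (\<lambda>y. heat_kernel eps t (x - y) *\<^sub>R g y))"

definition semigroupL :: "real \<Rightarrow> real \<Rightarrow> real \<Rightarrow> (real^'d \<Rightarrow> 'v::euclidean_space) \<Rightarrow> real^'d \<Rightarrow> 'v" where
  "semigroupL eps \<kappa> t g x = exp (- \<kappa> * t) *\<^sub>R heat_sg eps t g x"

definition interp_poly :: "(nat \<Rightarrow> real) \<Rightarrow> (nat \<Rightarrow> 'v::real_vector) \<Rightarrow> nat \<Rightarrow> real \<Rightarrow> 'v" where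
  "interp_poly t y j s = (\<Sum>k\<le>j. (\<Prod>l\<in>{..j} - {k}. (s - t l) / (t k - t l)) *\<^sub>R y k)"

definition rescale :: "real \<Rightarrow> real \<Rightarrow> real \<Rightarrow> (real \<Rightarrow> real^'m2^'m1) \<Rightarrow> real" where
  "rescale \<kappa> m \<tau> P = (let M = (SUP s\<in>{0..\<tau>}. frob_norm (P s)) in
     if M = 0 then 1 else min (\<kappa> * sqrt m / M) 1)"

text \<open>etd_stage eps kappa a tau U j = W_(j+1)^n (as function of s and x), where U = U^n.\<close>
primrec etd_stage :: "real \<Rightarrow> real \<Rightarrow> (nat \<Rightarrow> nat \<Rightarrow> real) \<Rightarrow> real \<Rightarrow>
    (real^'d \<Rightarrow> real^'m2^'m1) \<Rightarrow> nat \<Rightarrow> real \<Rightarrow> real^'d \<Rightarrow> real^'m2^'m1" where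
  "etd_stage eps \<kappa> a \<tau> U 0 =
     (\<lambda>s x. semigroupL eps \<kappa> s U x
        + integral {0..s} (\<lambda>\<sigma>. semigroupL eps \<kappa> (s - \<sigma>) (\<lambda>y. Nop \<kappa> (U y)) x))"
| "etd_stage eps \<kappa> a \<tau> U (Suc j) =
     (let P = (\<lambda>\<sigma> y. interp_poly (\<lambda>k. a (Suc j) k * \<tau>)
                  (\<lambda>k. if k = 0 then Nop \<kappa> (U y)
                        else Nop \<kappa> (etd_stage eps \<kappa> a \<tau> U j (a (Suc j) k * \<tau>) y))
                  (Suc j) \<sigma>);
          Pt = (\<lambda>\<sigma> y. rescale \<kappa> (real CARD('m2)) \<tau> (\<lambda>\<sigma>'. P \<sigma>' y) *\<^sub>R P \<sigma> y)
      in (\<lambda>s x. semigroupL eps \<kappa> s U x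
            + integral {0..s} (\<lambda>\<sigma>. semigroupL eps \<kappa> (s - \<sigma>) (Pt \<sigma>) x)))"

primrec etd_iter :: "real \<Rightarrow> real \<Rightarrow> (nat \<Rightarrow> nat \<Rightarrow> real) \<Rightarrow> real \<Rightarrow> nat \<Rightarrow>
    (real^'d \<Rightarrow> real^'m2^'m1) \<Rightarrow> nat \<Rightarrow> real^'d \<Rightarrow> real^'m2^'m1" where
  "etd_iter eps \<kappa> a \<tau> r U0 0 = U0"
| "etd_iter eps \<kappa> a \<tau> r U0 (Suc n) = etd_stage eps \<kappa> a \<tau> (etd_iter eps \<kappa> a \<tau> r U0 n) (r - 1) \<tau>"

end

theory Submission
  imports Defs "HOL-Probability.Probability"
begin


lemma kernel_prod:
  fixes x y :: "real^'d"
  assumes "eps > 0" "t > 0"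
  shows "heat_kernel eps t (x - y) =
    (\<Prod>b\<in>Basis. normal_density (x \<bullet> b) (sqrt (2 * eps\<^sup>2 * t)) (y \<bullet> b))"
proof -
  define a where "a = 4 * pi * eps\<^sup>2 * t"
  have a: "a > 0" using assms by (simp add: a_def)
  have sq: "(sqrt (2 * eps\<^sup>2 * t))\<^sup>2 = 2 * eps\<^sup>2 * t" using assms by simp
  have nd: "normal_density (x \<bullet> b) (sqrt (2 * eps\<^sup>2 * t)) (y \<bullet> b)
      = (1 / sqrt a) * exp (- (((x - y) \<bullet> b)\<^sup>2) / (4 * eps\<^sup>2 * t))" for b
    unfolding normal_density_def sq a_def
    by (simp add: inner_diff_left power2_commute mult.assoc)
  have "(\<Prod>b\<in>Basis. normal_density (x \<bullet> b) (sqrt (2 * eps\<^sup>2 * t)) (y \<bullet> b))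
      = (1 / sqrt a) ^ card (Basis :: (real^'d) set) *
        exp (\<Sum>b\<in>Basis. - (((x - y) \<bullet> b)\<^sup>2) / (4 * eps\<^sup>2 * t))"
    unfolding nd prod.distrib prod_constant by (simp add: exp_sum)
  also have "card (Basis :: (real^'d) set) = CARD('d)" by simp
  also have "(\<Sum>b\<in>(Basis::(real^'d) set). - (((x - y) \<bullet> b)\<^sup>2) / (4 * eps\<^sup>2 * t))
      = - ((norm (x - y))\<^sup>2) / (4 * eps\<^sup>2 * t)"
  proof -
    have "(norm (x - y))\<^sup>2 = (\<Sum>b\<in>(Basis::(real^'d) set). ((x - y) \<bullet> b)\<^sup>2)"
      unfolding power2_norm_eq_inner by (subst euclidean_inner) (simp add: power2_eq_square)
    then show ?thesis by (simp add: sum_divide_distrib[symmetric] sum_negf)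
  qed
  also have "(1 / sqrt a) ^ CARD('d) = a powr (- real CARD('d) / 2)"
  proof -
    have "1 / sqrt a = a powr (- (1/2))"
      using a by (simp only: powr_minus_divide powr_half_sqrt less_imp_le)
    then have "(1 / sqrt a) ^ CARD('d) = a powr (real CARD('d) * (- (1/2)))"
      using a by (simp only: powr_power)
    then show ?thesis by simp
  qed
  finally show ?thesis unfolding heat_kernel_def a_def by simp
qed

lemma kernel_has_integral:
  fixes x :: "real^'d"
  assumes "eps > 0" "t > 0"
  shows "((\<lambda>y. heat_kernel eps t (x - y)) has_integral 1) UNIV"
proof -
  define \<sigma> where "\<sigma> = sqrt (2 * eps\<^sup>2 * t)"
  have eq: "(\<lambda>y. heat_kernel eps t (x - y)) =
    (\<lambda>y. \<Prod>b\<in>Basis. normal_density (x \<bullet> b) \<sigma> (y \<bullet> b))"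
    using kernel_prod[OF assms] unfolding \<sigma>_def by auto
  have one: "(\<integral>\<^sup>+u. ennreal (normal_density c \<sigma> u) \<partial>lborel) = 1" for c
  proof -
    have "\<sigma> > 0" unfolding \<sigma>_def using assms by simp
    then show ?thesis
      by (subst nn_integral_eq_integral) (auto simp: integrable_normal_density integral_normal_density)
  qed
  have "(\<integral>\<^sup>+y. ennreal (\<Prod>b\<in>Basis. normal_density (x \<bullet> b) \<sigma> (y \<bullet> b)) \<partial>lborel)
      = (\<integral>\<^sup>+y. (\<Prod>b\<in>(Basis::(real^'d) set). ennreal (normal_density (x \<bullet> b) \<sigma> (y \<bullet> b))) \<partial>lborel)"
    by (simp add: prod_ennreal)
  also have "\<dots> = (\<Prod>b\<in>(Basis::(real^'d) set). (\<integral>\<^sup>+u. ennreal (normal_density (x \<bullet> b) \<sigma> u) \<partial>lborel))"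
    by (rule nn_integral_lborel_prod) auto
  also have "\<dots> = ennreal 1" by (simp add: one)
  finally show ?thesis unfolding eq
    by (intro nn_integral_has_integral) (auto intro: prod_nonneg)
qed

lemma heat_kernel_nonneg: "0 \<le> heat_kernel eps t z"
  unfolding heat_kernel_def by simp

lemma heat_bound:
  fixes g :: "real^'d \<Rightarrow> 'v::euclidean_space"
  assumes "eps > 0" "t \<ge> 0" "\<And>y. norm (g y) \<le> C"
  shows "norm (heat_sg eps t g x) \<le> C"
proof (cases "t = 0")
  case True then show ?thesis using assms by (simp add: heat_sg_def)
next
  case False
  then have t: "t > 0" using assms by simp
  have C: "C \<ge> 0" using assms(3) norm_ge_zero order_trans by blast
  have hk: "((\<lambda>y. heat_kernel eps t (x - y) * C) has_integral 1 * C) UNIV"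
    by (rule has_integral_mult_left[OF kernel_has_integral[OF assms(1) t]])
  show ?thesis
  proof (cases "(\<lambda>y. heat_kernel eps t (x - y) *\<^sub>R g y) integrable_on UNIV")
    case True
    have "norm (integral UNIV (\<lambda>y. heat_kernel eps t (x - y) *\<^sub>R g y))
        \<le> integral UNIV (\<lambda>y. heat_kernel eps t (x - y) * C)"
      using True hk
      by (intro integral_norm_bound_integral)
         (auto intro!: mult_left_mono assms(3) heat_kernel_nonneg simp: heat_kernel_nonneg)
    also have "\<dots> = 1 * C" by (rule integral_unique[OF hk])
    finally show ?thesis using False by (simp add: heat_sg_def)
  next
    case False
    then show ?thesis using C t by (simp add: heat_sg_def not_integrable_integral)
  qed
qed

lemma semigroup_bound:
  fixes g :: "real^'d \<Rightarrow> 'v::euclidean_space"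
  assumes "eps > 0" "t \<ge> 0" "\<And>y. norm (g y) \<le> C"
  shows "norm (semigroupL eps \<kappa> t g x) \<le> exp (- \<kappa> * t) * C"
  unfolding semigroupL_def using heat_bound[OF assms, where x=x]
  by (simp add: mult_left_mono)

lemma norm_integral_le:
  fixes f :: "real \<Rightarrow> 'v::euclidean_space"
  assumes "g integrable_on S" "\<And>x. x \<in> S \<Longrightarrow> norm (f x) \<le> g x"
  shows "norm (integral S f) \<le> integral S g"
proof (cases "f integrable_on S")
  case True then show ?thesis using assms integral_norm_bound_integral by blast
next
  case False
  have "0 \<le> integral S g"
    using assms by (intro integral_nonneg) (auto intro: order_trans[OF norm_ge_zero])
  then show ?thesis using False by (simp add: not_integrable_integral)
qed

lemma exp_integral:
  fixes \<kappa> s :: real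
  assumes "s \<ge> 0"
  shows "((\<lambda>\<sigma>. exp (- \<kappa> * (s - \<sigma>)) * (\<kappa> * M)) has_integral (M - M * exp (- \<kappa> * s))) {0..s}"
proof -
  have "((\<lambda>\<sigma>. exp (- \<kappa> * (s - \<sigma>)) * (\<kappa> * M)) has_integral
        ((\<lambda>\<sigma>. M * exp (- \<kappa> * (s - \<sigma>))) s - (\<lambda>\<sigma>. M * exp (- \<kappa> * (s - \<sigma>))) 0)) {0..s}"
    using assms
    by (intro fundamental_theorem_of_calculus)
       (auto intro!: derivative_eq_intros simp: has_real_derivative_iff_has_vector_derivative[symmetric])
  then show ?thesis by simp
qed

lemma stage_bound:
  fixes U :: "real^'d \<Rightarrow> 'v::euclidean_space"
  assumes "eps > 0" "s \<ge> 0"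
    and "\<And>y. norm (U y) \<le> M"
    and "\<And>\<sigma> y. \<sigma> \<in> {0..s} \<Longrightarrow> norm (G \<sigma> y) \<le> \<kappa> * M"
  shows "norm (semigroupL eps \<kappa> s U x
           + integral {0..s} (\<lambda>\<sigma>. semigroupL eps \<kappa> (s - \<sigma>) (G \<sigma>) x)) \<le> M"
proof -
  have "norm (integral {0..s} (\<lambda>\<sigma>. semigroupL eps \<kappa> (s - \<sigma>) (G \<sigma>) x))
      \<le> integral {0..s} (\<lambda>\<sigma>. exp (- \<kappa> * (s - \<sigma>)) * (\<kappa> * M))"
  proof (rule norm_integral_le)
    show "(\<lambda>\<sigma>. exp (- \<kappa> * (s - \<sigma>)) * (\<kappa> * M)) integrable_on {0..s}"
      using exp_integral[OF assms(2), of \<kappa> M] by blast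
    fix \<sigma> assume "\<sigma> \<in> {0..s}"
    then show "norm (semigroupL eps \<kappa> (s - \<sigma>) (G \<sigma>) x) \<le> exp (- \<kappa> * (s - \<sigma>)) * (\<kappa> * M)"
      by (intro semigroup_bound assms) auto
  qed
  also have "\<dots> = M - M * exp (- \<kappa> * s)"
    by (rule integral_unique[OF exp_integral[OF assms(2)]])
  finally have I: "norm (integral {0..s} (\<lambda>\<sigma>. semigroupL eps \<kappa> (s - \<sigma>) (G \<sigma>) x))
      \<le> M - M * exp (- \<kappa> * s)" .
  have S: "norm (semigroupL eps \<kappa> s U x) \<le> exp (- \<kappa> * s) * M"
    by (rule semigroup_bound[OF assms(1,2,3)])
  show ?thesis using norm_triangle_le[OF add_mono[OF S I]] by (simp add: algebra_simps)
qed



lemma frob_norm_eq: "frob_norm (A :: real^'n^'m) = norm A"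
  unfolding frob_norm_def norm_vec_def L2_set_def
  by (simp add: sum_nonneg)

lemma inner_matmul:
  fixes X :: "real^'n^'m" and Y :: "real^'p^'m" and M :: "real^'n^'p"
  shows "inner X (Y ** M) = inner (transpose Y ** X) M"
proof -
  have "inner X (Y ** M) = (\<Sum>i\<in>UNIV. \<Sum>j\<in>UNIV. \<Sum>k\<in>UNIV. X$i$j * Y$i$k * M$k$j)"
    by (simp add: inner_vec_def matrix_matrix_mult_def sum_distrib_left mult.assoc)
  also have "\<dots> = (\<Sum>i\<in>UNIV. \<Sum>k\<in>UNIV. \<Sum>j\<in>UNIV. X$i$j * Y$i$k * M$k$j)"
    by (rule sum.cong[OF refl], rule sum.swap)
  also have "\<dots> = (\<Sum>k\<in>UNIV. \<Sum>i\<in>UNIV. \<Sum>j\<in>UNIV. X$i$j * Y$i$k * M$k$j)"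
    by (rule sum.swap)
  also have "\<dots> = (\<Sum>k\<in>UNIV. \<Sum>j\<in>UNIV. \<Sum>i\<in>UNIV. X$i$j * Y$i$k * M$k$j)"
    by (rule sum.cong[OF refl], rule sum.swap)
  also have "\<dots> = inner (transpose Y ** X) M"
    by (simp add: inner_vec_def matrix_matrix_mult_def transpose_def sum_distrib_left mult_ac)
  finally show ?thesis .
qed

lemma norm_matmul_le:
  fixes X :: "real^'p^'m" and Y :: "real^'n^'p"
  shows "norm (X ** Y) \<le> norm X * norm Y"
proof -
  define col where "col k = (\<chi> j. Y$j$k)" for k
  have e: "(X ** Y)$i$k = inner (X$i) (col k)" for i k
    by (simp add: matrix_matrix_mult_def inner_vec_def col_def)
  have "(norm (X ** Y))\<^sup>2 = (\<Sum>i\<in>UNIV. \<Sum>k\<in>UNIV. (inner (X$i) (col k))\<^sup>2)"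
    by (simp add: frob_norm_eq[symmetric] frob_norm_def e sum_nonneg)
  also have "\<dots> \<le> (\<Sum>i\<in>UNIV. \<Sum>k\<in>UNIV. (norm (X$i))\<^sup>2 * (norm (col k))\<^sup>2)"
  proof (intro sum_mono)
    fix i k
    have "\<bar>inner (X$i) (col k)\<bar> \<le> norm (X$i) * norm (col k)" by (rule Cauchy_Schwarz_ineq2)
    then have "(inner (X$i) (col k))\<^sup>2 \<le> (norm (X$i) * norm (col k))\<^sup>2"
      by (metis abs_ge_zero power2_abs power_mono)
    then show "(inner (X$i) (col k))\<^sup>2 \<le> (norm (X$i))\<^sup>2 * (norm (col k))\<^sup>2"
      by (simp add: power_mult_distrib)
  qed
  also have "\<dots> = (\<Sum>i\<in>UNIV. (norm (X$i))\<^sup>2) * (\<Sum>k\<in>UNIV. (norm (col k))\<^sup>2)"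
    by (rule sum_product[symmetric])
  also have "(\<Sum>i\<in>UNIV. (norm (X$i))\<^sup>2) = (norm X)\<^sup>2"
    by (simp add: norm_vec_def L2_set_def sum_nonneg)
  also have "(\<Sum>k\<in>UNIV. (norm (col k))\<^sup>2) = (norm Y)\<^sup>2"
  proof -
    have "(\<Sum>k\<in>UNIV. (norm (col k))\<^sup>2) = (\<Sum>k\<in>UNIV. \<Sum>j\<in>UNIV. (Y$j$k)\<^sup>2)"
      by (simp add: col_def norm_vec_def L2_set_def sum_nonneg)
    also have "\<dots> = (\<Sum>j\<in>UNIV. \<Sum>k\<in>UNIV. (Y$j$k)\<^sup>2)" by (rule sum.swap)
    also have "\<dots> = (norm Y)\<^sup>2" by (simp add: frob_norm_eq[symmetric] frob_norm_def sum_nonneg)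
    finally show ?thesis .
  qed
  finally have "(norm (X ** Y))\<^sup>2 \<le> (norm X * norm Y)\<^sup>2" by (simp add: power_mult_distrib)
  then show ?thesis by (simp add: power2_le_iff_abs_le)
qed

lemma matmul_diff_right:
  fixes U :: "real^'p^'m" and A B :: "real^'n^'p"
  shows "U ** (A - B) = U ** A - U ** B"
  by (simp add: vec_eq_iff matrix_matrix_mult_def sum_subtractf algebra_simps)

lemma inner_sq_diff:
  fixes x y :: "'a::real_inner"
  shows "inner (x - y) (x - y) = inner x x - 2 * inner x y + inner y y"
  by (simp add: inner_diff_left inner_diff_right inner_commute[of y x])

lemma inner_sq_diff_scale:
  fixes x y :: "'a::real_inner"
  shows "inner (a *\<^sub>R x - y) (a *\<^sub>R x - y) = a\<^sup>2 * inner x x - 2 * a * inner x y + inner y y"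
  unfolding inner_sq_diff by (simp add: power2_eq_square)

lemma Nop_bound:
  fixes U :: "real^'m2^'m1"
  assumes U: "norm U \<le> sqrt (real CARD('m2))" and k2: "\<kappa> \<ge> 2"
    and km: "real CARD('m2) \<le> 2 * \<kappa>"
  shows "norm (Nop \<kappa> U) \<le> \<kappa> * sqrt (real CARD('m2))"
proof -
  define m where "m = real CARD('m2)"
  define A where "A = transpose U ** U"
  define I where "I = (mat 1 :: real^'m2^'m2)"
  define s1 where "s1 = inner U U"
  define s2 where "s2 = inner A A"
  define s3 where "s3 = inner (U ** A) (U ** A)"
  have p: "inner U (U ** A) = s2" unfolding s2_def A_def by (rule inner_matmul)
  have AI: "inner A I = s1"
    using inner_matmul[of U U I] unfolding A_def I_def s1_def by simp
  have Ii: "I $ i = axis i 1" for i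
    by (simp add: I_def mat_def axis_def vec_eq_iff)
  have II: "inner I I = m"
    unfolding m_def inner_vec_def[of I I] Ii by (simp add: inner_axis_axis)
  have N: "Nop \<kappa> U = (\<kappa> + 1) *\<^sub>R U - U ** A"
    unfolding Nop_def fnl_def A_def matrix_mul_assoc by (simp add: algebra_simps)
  have nN: "(norm (Nop \<kappa> U))\<^sup>2 = (\<kappa> + 1)\<^sup>2 * s1 - 2 * (\<kappa> + 1) * s2 + s3"
    unfolding N power2_norm_eq_inner s1_def s3_def inner_sq_diff_scale p ..
  have s1m: "s1 \<le> m"
  proof -
    have "s1 = (norm U)\<^sup>2" by (simp add: s1_def power2_norm_eq_inner)
    also have "\<dots> \<le> (sqrt m)\<^sup>2" using U unfolding m_def by (intro power_mono) auto
    finally show ?thesis unfolding m_def by simp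
  qed
  have UAI: "U ** (A - I) = U ** A - U" by (simp add: matmul_diff_right I_def)
  have B: "(norm (A - I))\<^sup>2 = s2 - 2 * s1 + m"
    unfolding power2_norm_eq_inner inner_sq_diff s2_def AI II ..
  have C: "(norm (U ** A - U))\<^sup>2 = s3 - 2 * s2 + s1"
    unfolding power2_norm_eq_inner inner_sq_diff s3_def s1_def inner_commute[of "U ** A" U] p ..
  have sub: "norm (U ** A - U) \<le> norm U * norm (A - I)"
    using norm_matmul_le[of U "A - I"] UAI by simp
  then have "(norm (U ** A - U))\<^sup>2 \<le> (norm U * norm (A - I))\<^sup>2"
    by (rule power_mono[OF _ norm_ge_zero])
  then have "(norm (U ** A - U))\<^sup>2 \<le> (norm U)\<^sup>2 * (norm (A - I))\<^sup>2"
    by (simp only: power_mult_distrib)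
  then have c1: "s3 - 2 * s2 + s1 \<le> s1 * (s2 - 2 * s1 + m)"
    unfolding B C by (simp add: s1_def power2_norm_eq_inner)
  have Bn: "s2 - 2 * s1 + m \<ge> 0" using B[symmetric] by simp
  have c2: "s1 * (s2 - 2 * s1 + m) \<le> (2 * \<kappa>) * (s2 - 2 * s1 + m)"
    using s1m km Bn unfolding m_def by (intro mult_right_mono) auto
  have c3: "(\<kappa>\<^sup>2 - 2 * \<kappa>) * s1 \<le> (\<kappa>\<^sup>2 - 2 * \<kappa>) * m"
    using s1m k2 by (intro mult_left_mono) (auto simp: power2_eq_square)
  have id: "(\<kappa> + 1)\<^sup>2 * s1 - 2 * (\<kappa> + 1) * s2 + s3 - \<kappa>\<^sup>2 * m
      = ((s3 - 2 * s2 + s1) - (2 * \<kappa>) * (s2 - 2 * s1 + m))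
        + ((\<kappa>\<^sup>2 - 2 * \<kappa>) * s1 - (\<kappa>\<^sup>2 - 2 * \<kappa>) * m)"
    by (simp add: power2_eq_square algebra_simps)
  have "(norm (Nop \<kappa> U))\<^sup>2 \<le> \<kappa>\<^sup>2 * m"
    unfolding nN using c1 c2 c3 id by linarith
  also have "\<dots> = (\<kappa> * sqrt m)\<^sup>2" unfolding m_def by (simp add: power_mult_distrib)
  finally have F: "(norm (Nop \<kappa> U))\<^sup>2 \<le> (\<kappa> * sqrt m)\<^sup>2" .
  have "0 \<le> \<kappa> * sqrt m" using k2 by (simp add: m_def)
  from power2_le_imp_le[OF F this] show ?thesis unfolding m_def .
qed



lemma interp_cont:
  fixes y :: "nat \<Rightarrow> 'v::real_normed_vector"
  shows "continuous_on S (\<lambda>s. interp_poly t y j s)"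
  unfolding interp_poly_def divide_inverse
  by (intro continuous_on_sum continuous_on_scaleR continuous_on_prod continuous_on_mult
        continuous_on_diff continuous_on_const continuous_on_id)

lemma rescale_bound:
  fixes Q :: "real \<Rightarrow> real^'m2^'m1"
  assumes "continuous_on {0..\<tau>} Q" "\<sigma> \<in> {0..\<tau>}" "c \<ge> 0" "c = \<kappa> * sqrt m"
  shows "norm (rescale \<kappa> m \<tau> Q *\<^sub>R Q \<sigma>) \<le> c"
proof -
  define M where "M = (SUP s\<in>{0..\<tau>}. frob_norm (Q s))"
  have fn: "frob_norm (Q s) = norm (Q s)" for s
    unfolding frob_norm_def norm_vec_def L2_set_def by (simp add: sum_nonneg)
  have "compact ((\<lambda>s. norm (Q s)) ` {0..\<tau>})"
    by (intro compact_continuous_image continuous_intros assms(1)) auto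
  then have bdd: "bdd_above ((\<lambda>s. frob_norm (Q s)) ` {0..\<tau>})"
    unfolding fn by (intro bounded_imp_bdd_above compact_imp_bounded)
  have le: "norm (Q \<sigma>) \<le> M"
    unfolding M_def fn[symmetric] using assms(2) bdd by (rule cSUP_upper)
  have M0: "M \<ge> 0" using le norm_ge_zero order_trans by blast
  show ?thesis
  proof (cases "M = 0")
    case True
    then show ?thesis using le assms(3) by (simp add: rescale_def M_def[symmetric])
  next
    case False
    then have Mp: "M > 0" using M0 by simp
    define \<alpha> where "\<alpha> = min (c / M) 1"
    have r: "rescale \<kappa> m \<tau> Q = \<alpha>"
      using False by (simp add: rescale_def M_def[symmetric] \<alpha>_def assms(4))
    have a0: "\<alpha> \<ge> 0" using assms(3) Mp by (simp add: \<alpha>_def)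
    have "\<alpha> * norm (Q \<sigma>) \<le> (c / M) * M"
      using assms(3) M0 by (intro mult_mono le a0) (auto simp: \<alpha>_def)
    also have "\<dots> = c" using Mp by simp
    finally show ?thesis using r a0 by simp
  qed
qed

lemma periodic_int:
  fixes U0 :: "real^'d \<Rightarrow> 'v"
  assumes "\<And>x. U0 (x + L *\<^sub>R v) = U0 x"
  shows "U0 (x + (of_int n * L) *\<^sub>R v) = U0 x"
proof -
  have nat: "U0 (x + (of_nat k * L) *\<^sub>R v) = U0 x" for k x
  proof (induction k arbitrary: x)
    case 0 then show ?case by simp
  next
    case (Suc k)
    have "U0 (x + (of_nat (Suc k) * L) *\<^sub>R v) = U0 ((x + (of_nat k * L) *\<^sub>R v) + L *\<^sub>R v)"
      by (rule arg_cong[where f=U0]) (simp add: distrib_right scaleR_add_left add.assoc)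
    also have "\<dots> = U0 (x + (of_nat k * L) *\<^sub>R v)" by (rule assms)
    also have "\<dots> = U0 x" by (rule Suc.IH)
    finally show ?case .
  qed
  show ?thesis
  proof (cases "n \<ge> 0")
    case True
    define k where "k = nat n"
    have "n = int k" using True by (simp add: k_def)
    then show ?thesis using nat by simp
  next
    case False
    define k where "k = nat (- n)"
    have k: "n = - int k" using False by (simp add: k_def)
    have z: "(of_int n * L) *\<^sub>R v + (of_nat k * L) *\<^sub>R v = 0"
      by (simp add: k)
    have "U0 x = U0 ((x + (of_int n * L) *\<^sub>R v) + (of_nat k * L) *\<^sub>R v)"
      by (simp only: add.assoc z add_0_right)
    also have "\<dots> = U0 (x + (of_int n * L) *\<^sub>R v)" by (rule nat)
    finally show ?thesis by simp
  qed
qed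

lemma periodic_sum:
  fixes U0 :: "real^'d \<Rightarrow> 'v"
  assumes "\<And>x i. U0 (x + L i *\<^sub>R axis i 1) = U0 x" "finite S"
  shows "U0 (x + (\<Sum>i\<in>S. (of_int (k i) * L i) *\<^sub>R axis i 1)) = U0 x"
  using assms(2)
proof (induction S rule: finite_induct)
  case empty then show ?case by simp
next
  case (insert j S)
  have "U0 (x + (\<Sum>i\<in>insert j S. (of_int (k i) * L i) *\<^sub>R axis i 1))
      = U0 ((x + (\<Sum>i\<in>S. (of_int (k i) * L i) *\<^sub>R axis i 1)) + (of_int (k j) * L j) *\<^sub>R axis j 1)"
    by (simp only: sum.insert[OF insert(1,2)] add.assoc add.commute[of "(of_int (k j) * L j) *\<^sub>R axis j 1"])
  also have "\<dots> = U0 (x + (\<Sum>i\<in>S. (of_int (k i) * L i) *\<^sub>R axis i 1))"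
    by (rule periodic_int) (rule assms(1))
  finally show ?case using insert by simp
qed

lemma periodic_bound:
  fixes U0 :: "real^'d \<Rightarrow> 'v::real_normed_vector" and lo hi :: "real^'d"
  assumes "\<forall>i. lo$i < hi$i"
    and "\<forall>x i. U0 (x + (hi$i - lo$i) *\<^sub>R axis i 1) = U0 x"
    and "\<forall>x\<in>cbox lo hi. norm (U0 x) \<le> C"
  shows "norm (U0 x) \<le> C"
proof -
  define L where "L i = hi$i - lo$i" for i
  have Lp: "L i > 0" for i using assms(1) by (simp add: L_def)
  define k where "k i = - floor ((x$i - lo$i) / L i)" for i
  define y where "y = x + (\<Sum>i\<in>UNIV. (of_int (k i) * L i) *\<^sub>R axis i 1)"
  have yc: "y$i = x$i + of_int (k i) * L i" for i
    by (simp add: y_def axis_def if_distrib[of "\<lambda>z. _ * z"] cong: if_cong)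
  have "y \<in> cbox lo hi"
    unfolding mem_box_cart
  proof
    fix i
    define r where "r = (x$i - lo$i) / L i"
    have f1: "of_int (floor r) \<le> r" and f2: "r < of_int (floor r) + 1"
      by (simp_all add: floor_less_iff[symmetric] of_int_floor_le)
    have "of_int (floor r) * L i \<le> r * L i" using f1 Lp[of i] by (intro mult_right_mono) auto
    moreover have "r * L i < (of_int (floor r) + 1) * L i" using f2 Lp[of i] by (intro mult_strict_right_mono) auto
    moreover have "r * L i = x$i - lo$i" using Lp[of i] by (simp add: r_def)
    ultimately show "lo$i \<le> y$i \<and> y$i \<le> hi$i"
      unfolding yc k_def r_def[symmetric] by (simp add: L_def algebra_simps)
  qed
  moreover have "U0 y = U0 x"
    unfolding y_def by (rule periodic_sum) (use assms(2) L_def in auto)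
  ultimately show ?thesis using assms(3) by metis
qed


theorem theorem3p1:
  fixes lo hi :: "real^'d" and eps \<kappa> \<tau> :: real and a :: "nat \<Rightarrow> nat \<Rightarrow> real"
    and r :: nat and U0 :: "real^'d \<Rightarrow> real^'m2^'m1"
  assumes "CARD('d) \<le> 3"
    and "CARD('m2) \<le> CARD('m1)"
    and "\<forall>i. lo$i < hi$i"
    and "eps > 0"
    and "\<forall>j\<ge>1. a j 0 = 0 \<and> a j j = 1 \<and> (\<forall>k<j. a j k < a j (Suc k))"
    and "r \<ge> 1"
    and "\<kappa> \<ge> max (3/2 * real CARD('m2) - 1) 2"
    and "continuous_on UNIV U0"
    and "\<forall>x i. U0 (x + (hi$i - lo$i) *\<^sub>R axis i 1) = U0 x"
    and "\<forall>x\<in>cbox lo hi. frob_norm (U0 x) \<le> sqrt (real CARD('m2))"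
    and "\<tau> > 0"
  shows "\<forall>n\<ge>1. \<forall>x\<in>box lo hi.
           frob_norm (etd_iter eps \<kappa> a \<tau> r U0 n x) \<le> sqrt (real CARD('m2))"
proof -
  have c1: "CARD('m2) \<ge> 1" by (simp add: Suc_le_eq)
  have k2: "\<kappa> \<ge> 2" using assms(7) by simp
  have km: "real CARD('m2) \<le> 2 * \<kappa>" using assms(7) c1 by simp
  have kpos: "\<kappa> * sqrt (real CARD('m2)) \<ge> 0" using k2 by simp
  have tau: "\<tau> \<ge> 0" using assms(11) by simp
  have U0b: "norm (U0 y) \<le> sqrt (real CARD('m2))" for y
    using periodic_bound[OF assms(3) assms(9)] assms(10) by (simp add: frob_norm_eq)
  have main: "\<forall>y. norm (etd_iter eps \<kappa> a \<tau> r U0 n y) \<le> sqrt (real CARD('m2))" for n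
  proof (induction n)
    case 0 then show ?case using U0b by simp
  next
    case (Suc n)
    define U where "U = etd_iter eps \<kappa> a \<tau> r U0 n"
    have IH: "\<And>y. norm (U y) \<le> sqrt (real CARD('m2))" using Suc.IH U_def by simp
    show ?case
    proof (cases "r - 1")
      case 0
      show ?thesis
        unfolding etd_iter.simps U_def[symmetric] 0 etd_stage.simps(1)
        by (intro allI stage_bound[OF assms(4) tau] IH Nop_bound k2 km)
    next
      case (Suc j)
      show ?thesis
        unfolding etd_iter.simps U_def[symmetric] Suc etd_stage.simps(2) Let_def
      proof (intro allI stage_bound[OF assms(4) tau] IH)
        fix \<sigma> y assume s: "\<sigma> \<in> {0..\<tau>}"
        show "norm (rescale \<kappa> (real CARD('m2)) \<tau>
            (\<lambda>\<sigma>'. interp_poly (\<lambda>k. a (Suc j) k * \<tau>)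
                  (\<lambda>k. if k = 0 then Nop \<kappa> (U y)
                        else Nop \<kappa> (etd_stage eps \<kappa> a \<tau> U j (a (Suc j) k * \<tau>) y))
                  (Suc j) \<sigma>') *\<^sub>R
            interp_poly (\<lambda>k. a (Suc j) k * \<tau>)
                  (\<lambda>k. if k = 0 then Nop \<kappa> (U y)
                        else Nop \<kappa> (etd_stage eps \<kappa> a \<tau> U j (a (Suc j) k * \<tau>) y))
                  (Suc j) \<sigma>)
          \<le> \<kappa> * sqrt (real CARD('m2))"
          by (rule rescale_bound[OF interp_cont s kpos refl])
      qed
    qed
  qed
  show ?thesis using main by (simp add: frob_norm_eq)
qed

end
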